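(* Let $r$ and $k$ be positive integers, and let $G$ be a graph with $\chi(G)\le r$. Let $P\subset V(G)$ and let $d\colon P\to[r+k]$ be a precoloring of $P$ in $G$. Let $H$ be the complete graph with $V(H)=[r+k]$, and let $\mathbf{E}^d=(E_0^d,E_1^d,E_2^d)$ be as defined in the context. (1) If $k\le r$ and $H$ has a good matching for $\mathbf{E}^d$ of order $\lfloor\frac12(r+k)\rfloor$, then $d$ can be extended to a $\lceil\frac{3r+k}{2}\rceil$-coloring of $G$. (2) If $k>r$ and $H$ has a good matching for $\mathbf{E}^d$ of order $r$, then $d$ can be extended to an $(r+k)$-coloring of $G$.
   Context: $\mathcal{D}_G(P,2)=\{\{x,y\}\subset P: x\ne y,\ d_G(x,y)\le 2\}$. $[m]=\{1,\dots,m\}$. A precoloring of $P$ in $G$ is a proper coloring of $G[P]$; an $m$-coloring is a proper coloring with at most $m$ colors; $d$ is extended by $f$ if $f(v)=d(v)$ for all $v\in P$. For each edge $e=ij$ of $H$, $\varphi(e)=|\{\{x,y\}\in\mathcal{D}_G(P,2):\{d(x),d(y)\}=\{i,j\}\}|$, and $E_0^d=\{e:\varphi(e)=0\}$, $E_1^d=\{e:\varphi(e)=1\}$, $E_2^d=\{e:\varphi(e)\ge2\}$, $\mathbf{E}^d=(E_0^d,E_1^d,E_2^d)$. For an ordered partition $\mathbf{E}=(E_0,E_1,E_2)$ of $E(H)$ (pairwise disjoint sets, possibly empty, with union $E(H)$), a matching $M$ of $H$ is a good matching for $\mathbf{E}$ if $M\cap E_2=\emptyset$ and $|M\cap E_1|\le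 1$. The order of a matching is its number of edges. *)

theory Defs
  imports Main
begin

definition graph :: "'a set \<Rightarrow> ('a \<Rightarrow> 'a \<Rightarrow> bool) \<Rightarrow> bool" where
  "graph V E \<longleftrightarrow> finite V \<and> (\<forall>x y. E x y \<longrightarrow> E y x) \<and> (\<forall>x. \<not> E x x)
     \<and> (\<forall>x y. E x y \<longrightarrow> x \<in> V \<and> y \<in> V)"

definition proper_on :: "('a \<Rightarrow> 'a \<Rightarrow> bool) \<Rightarrow> 'a set \<Rightarrow> ('a \<Rightarrow> nat) \<Rightarrow> bool" where
  "proper_on E S f \<longleftrightarrow> (\<forall>x\<in>S. \<forall>y\<in>S. E x y \<longrightarrow> f x \<noteq> f y)"

definition chromatic_le :: "'a set \<Rightarrow> ('a \<Rightarrow> 'a \<Rightarrow> bool) \<Rightarrow> nat \<Rightarrow> bool" where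
  "chromatic_le V E r \<longleftrightarrow> (\<exists>f. proper_on E V f \<and> f ` V \<subseteq> {1..r})"

definition precoloring :: "('a \<Rightarrow> 'a \<Rightarrow> bool) \<Rightarrow> 'a set \<Rightarrow> nat \<Rightarrow> ('a \<Rightarrow> nat) \<Rightarrow> bool" where
  "precoloring E P n d \<longleftrightarrow> proper_on E P d \<and> d ` P \<subseteq> {1..n}"

definition extends_to_coloring ::
  "'a set \<Rightarrow> ('a \<Rightarrow> 'a \<Rightarrow> bool) \<Rightarrow> 'a set \<Rightarrow> ('a \<Rightarrow> nat) \<Rightarrow> nat \<Rightarrow> bool" where
  "extends_to_coloring V E P d m \<longleftrightarrow>
     (\<exists>f. proper_on E V f \<and> card (f ` V) \<le> m \<and> (\<forall>v\<in>P. f v = d v))"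

definition dist_le2 :: "('a \<Rightarrow> 'a \<Rightarrow> bool) \<Rightarrow> 'a \<Rightarrow> 'a \<Rightarrow> bool" where
  "dist_le2 E x y \<longleftrightarrow> E x y \<or> (\<exists>z. E x z \<and> E z y)"

definition D2 :: "('a \<Rightarrow> 'a \<Rightarrow> bool) \<Rightarrow> 'a set \<Rightarrow> 'a set set" where
  "D2 E P = {{x, y} | x y. x \<in> P \<and> y \<in> P \<and> x \<noteq> y \<and> dist_le2 E x y}"

definition H_edges :: "nat \<Rightarrow> nat set set" where
  "H_edges n = {e. e \<subseteq> {1..n} \<and> card e = 2}"

definition phi :: "('a \<Rightarrow> 'a \<Rightarrow> bool) \<Rightarrow> 'a set \<Rightarrow> ('a \<Rightarrow> nat) \<Rightarrow> nat set \<Rightarrow> nat" where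
  "phi E P d e = card {p \<in> D2 E P. d ` p = e}"

definition Ed0 where "Ed0 E P d n = {e \<in> H_edges n. phi E P d e = 0}"
definition Ed1 where "Ed1 E P d n = {e \<in> H_edges n. phi E P d e = 1}"
definition Ed2 where "Ed2 E P d n = {e \<in> H_edges n. phi E P d e \<ge> 2}"

definition matching :: "nat \<Rightarrow> nat set set \<Rightarrow> bool" where
  "matching n M \<longleftrightarrow> M \<subseteq> H_edges n \<and> (\<forall>e\<in>M. \<forall>e'\<in>M. e \<noteq> e' \<longrightarrow> e \<inter> e' = {})"

definition good_matching :: "nat \<Rightarrow> nat set set \<Rightarrow> nat set set \<Rightarrow> nat set set \<Rightarrow> nat set set \<Rightarrow> bool" where
  "good_matching n E0 E1 E2 M \<longleftrightarrow> matching n M \<and> M \<inter> E2 = {} \<and> card (M \<inter> E1) \<le> 1"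

end

theory Submission
  imports Defs
begin

lemma inj_fix:
  assumes "finite A" "finite B" "card A \<le> card B" "a \<in> A" "b \<in> B"
  shows "\<exists>\<tau>. inj_on \<tau> A \<and> \<tau> ` A \<subseteq> B \<and> \<tau> a = b"
proof -
  obtain t0 where t0: "t0 ` A \<subseteq> B" "inj_on t0 A"
    using card_le_inj[OF assms(1,2,3)] by blast
  define sw where "sw j = (if j = t0 a then b else if j = b then t0 a else j)" for j
  have injsw: "inj sw" by (auto simp: inj_on_def sw_def split: if_splits)
  have "inj_on (sw \<circ> t0) A"
    using t0(2) injsw by (metis comp_inj_on inj_on_subset subset_UNIV)
  moreover have "(sw \<circ> t0) ` A \<subseteq> B" using t0(1) assms(4,5) by (auto simp: sw_def)
  moreover have "(sw \<circ> t0) a = b" by (simp add: sw_def)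
  ultimately show ?thesis by blast
qed

lemma ext_mono: "extends_to_coloring V E P d m \<Longrightarrow> m \<le> m' \<Longrightarrow> extends_to_coloring V E P d m'"
  unfolding extends_to_coloring_def by (meson order_trans)

lemma main:
  assumes G: "graph V E" and chi: "chromatic_le V E r" and PV: "P \<subseteq> V"
    and pre: "precoloring E P n d"
    and gm: "good_matching n (Ed0 E P d n) (Ed1 E P d n) (Ed2 E P d n) M"
    and cM: "card M \<le> r"
  shows "extends_to_coloring V E P d (n + r - card M)"
proof -
  obtain c where cp: "proper_on E V c" and cr: "c ` V \<subseteq> {1..r}"
    using chi unfolding chromatic_le_def by blast
  have finV: "finite V" and sym: "\<And>x y. E x y \<Longrightarrow> E y x"
    using G unfolding graph_def by auto
  have finP: "finite P" using PV finV finite_subset by blast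
  have dP: "d ` P \<subseteq> {1..n}" and dprop: "proper_on E P d"
    using pre unfolding precoloring_def by auto
  have Msub: "M \<subseteq> H_edges n" and Mdisj: "\<And>e e'. e \<in> M \<Longrightarrow> e' \<in> M \<Longrightarrow> e \<noteq> e' \<Longrightarrow> e \<inter> e' = {}"
    using gm unfolding good_matching_def matching_def by auto
  have M2: "M \<inter> Ed2 E P d n = {}" and M1: "card (M \<inter> Ed1 E P d n) \<le> 1"
    using gm unfolding good_matching_def by auto
  have finH: "finite (H_edges n)"
    by (rule finite_subset[of _ "Pow {1..n}"]) (auto simp: H_edges_def)
  have finM: "finite M" using Msub finH finite_subset by blast
  have edge: "\<And>e. e \<in> M \<Longrightarrow> e \<subseteq> {1..n} \<and> card e = 2"
    using Msub by (auto simp: H_edges_def)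
  have finD: "finite {p \<in> D2 E P. d ` p = e}" for e
    by (rule finite_subset[of _ "Pow P"]) (auto simp: D2_def finP)
  have bad: "e \<in> Ed1 E P d n \<and> {p \<in> D2 E P. d ` p = e} = {{u1, u2}}"
    if e: "e \<in> M" and v: "v \<in> V" and u: "u1 \<in> P" "u2 \<in> P" "E v u1" "E v u2"
      "d u1 \<in> e" "d u2 \<in> e" "d u1 \<noteq> d u2" for e v u1 u2
  proof -
    have c2: "card e = 2" using edge e by blast
    have eq: "e = {d u1, d u2}"
    proof -
      obtain a b where "e = {a, b}" "a \<noteq> b" using c2 card_2_iff by metis
      thus ?thesis using u by auto
    qed
    have ne: "u1 \<noteq> u2" using u by auto
    have "dist_le2 E u1 u2" unfolding dist_le2_def using u sym by blast
    hence inD: "{u1, u2} \<in> D2 E P" unfolding D2_def using u ne by blast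
    have mem: "{u1, u2} \<in> {p \<in> D2 E P. d ` p = e}" using inD eq by auto
    have ge: "phi E P d e \<ge> 1" unfolding phi_def
      using mem finD by (metis One_nat_def Suc_leI card_gt_0_iff empty_iff)
    have "e \<notin> Ed2 E P d n" using M2 e by blast
    hence "\<not> phi E P d e \<ge> 2" using Msub e unfolding Ed2_def by blast
    hence p1: "phi E P d e = 1" using ge by linarith
    hence "e \<in> Ed1 E P d n" using Msub e unfolding Ed1_def by blast
    moreover have "{p \<in> D2 E P. d ` p = e} = {{u1, u2}}"
      using p1 mem unfolding phi_def by (metis card_1_singletonE singletonD)
    ultimately show ?thesis by blast
  qed
  obtain \<tau> where tinj: "inj_on \<tau> M" and trng: "\<tau> ` M \<subseteq> {1..r}"
    and tgood: "\<And>e v u1 u2. e \<in> M \<Longrightarrow> v \<in> V \<Longrightarrow> u1 \<in> P \<Longrightarrow> u2 \<in> P \<Longrightarrow> E v u1 \<Longrightarrow> E v u2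
       \<Longrightarrow> d u1 \<in> e \<Longrightarrow> d u2 \<in> e \<Longrightarrow> d u1 \<noteq> d u2 \<Longrightarrow> c v = \<tau> e \<Longrightarrow> False"
  proof (cases "M \<inter> Ed1 E P d n = {}")
    case True
    obtain t where t1: "inj_on t M" and t2: "t ` M \<subseteq> {1..r}"
      using card_le_inj[OF finM, of "{1..r}"] cM by auto
    have t3: "False" if "e \<in> M" "v \<in> V" "u1 \<in> P" "u2 \<in> P" "E v u1" "E v u2"
       "d u1 \<in> e" "d u2 \<in> e" "d u1 \<noteq> d u2" for e v u1 u2
    proof -
      have "e \<in> Ed1 E P d n" using bad[OF that] by (rule conjunct1)
      then show False using True that(1) by blast
    qed
    show ?thesis by (rule that[OF t1 t2 t3])
  next
    case False
    then obtain e1 where e1: "e1 \<in> M \<inter> Ed1 E P d n" by blast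
    have only: "\<And>e. e \<in> M \<inter> Ed1 E P d n \<Longrightarrow> e = e1"
    proof -
      fix e assume "e \<in> M \<inter> Ed1 E P d n"
      moreover have "finite (M \<inter> Ed1 E P d n)" using finM by simp
      ultimately show "e = e1" using card_le_Suc0_iff_eq M1 e1 by (metis One_nat_def)
    qed
    have "phi E P d e1 = 1" using e1 unfolding Ed1_def by blast
    then obtain p1 where p1: "{p \<in> D2 E P. d ` p = e1} = {p1}"
      unfolding phi_def by (metis card_1_singletonE)
    hence "p1 \<in> D2 E P" by blast
    then obtain x y where xy: "p1 = {x, y}" "x \<in> P" unfolding D2_def by blast
    have cx: "c x \<in> {1..r}" using cr xy PV by blast
    obtain t where t: "inj_on t M" "t ` M \<subseteq> {1..r}" "t e1 = c x"
      using inj_fix[OF finM _ _ _ cx] cM e1 by auto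
    have "False" if h: "e \<in> M" "v \<in> V" "u1 \<in> P" "u2 \<in> P" "E v u1" "E v u2"
       "d u1 \<in> e" "d u2 \<in> e" "d u1 \<noteq> d u2" "c v = t e" for e v u1 u2
    proof -
      have b: "e \<in> Ed1 E P d n \<and> {p \<in> D2 E P. d ` p = e} = {{u1, u2}}"
        using bad[OF h(1-9)] .
      hence ee: "e = e1" using only h(1) by blast
      hence "{u1, u2} = {x, y}" using b p1 xy by auto
      hence "E v x" using h(5,6) by (metis doubleton_eq_iff insertI1)
      moreover have "c v = c x" using h(10) ee t(3) by simp
      moreover have "x \<in> V" using xy PV by blast
      ultimately show False using cp h(2) unfolding proper_on_def by blast
    qed
    thus ?thesis by (rule that[OF t(1) t(2)])
  qed
  define f where "f v = (if v \<in> P then d v else if c v \<in> \<tau> ` M then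
      (SOME a. a \<in> inv_into M \<tau> (c v) \<and> (\<forall>u\<in>P. E v u \<longrightarrow> d u \<noteq> a)) else n + c v)" for v
  have choose: "f v \<in> inv_into M \<tau> (c v) \<and> (\<forall>u\<in>P. E v u \<longrightarrow> d u \<noteq> f v)"
    if v: "v \<in> V" "v \<notin> P" "c v \<in> \<tau> ` M" for v
  proof -
    define e where "e = inv_into M \<tau> (c v)"
    have eM: "e \<in> M" unfolding e_def using v(3) by (simp add: inv_into_into)
    have te: "\<tau> e = c v" unfolding e_def using v(3) by (simp add: f_inv_into_f)
    obtain a b where ab: "e = {a, b}" "a \<noteq> b" using edge[OF eM] card_2_iff by metis
    have "\<exists>a. a \<in> e \<and> (\<forall>u\<in>P. E v u \<longrightarrow> d u \<noteq> a)"
    proof (rule ccontr)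
      assume "\<not> ?thesis"
      then obtain u1 u2 where "u1 \<in> P" "E v u1" "d u1 = a" "u2 \<in> P" "E v u2" "d u2 = b"
        using ab by blast
      thus False using tgood[OF eM v(1)] ab te by auto
    qed
    hence ex: "\<exists>a. a \<in> inv_into M \<tau> (c v) \<and> (\<forall>u\<in>P. E v u \<longrightarrow> d u \<noteq> a)"
      unfolding e_def .
    have fv: "f v = (SOME a. a \<in> inv_into M \<tau> (c v) \<and> (\<forall>u\<in>P. E v u \<longrightarrow> d u \<noteq> a))"
      using v unfolding f_def by simp
    have "f v \<in> e \<and> (\<forall>u\<in>P. E v u \<longrightarrow> d u \<noteq> f v)"
      unfolding fv e_def by (rule someI_ex[OF ex])
    thus ?thesis unfolding e_def .
  qed
  have fresh: "f v = n + c v" if "v \<notin> P" "c v \<notin> \<tau> ` M" for v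
    using that unfolding f_def by simp
  have fP: "\<And>v. v \<in> P \<Longrightarrow> f v = d v" unfolding f_def by simp
  have cV1: "\<And>v. v \<in> V \<Longrightarrow> c v \<in> {1..r}" using cr by blast
  have proper: "proper_on E V f"
    unfolding proper_on_def
  proof (intro ballI impI)
    fix v w assume v: "v \<in> V" and w: "w \<in> V" and vw: "E v w"
    have wv: "E w v" using sym vw .
    have small: "\<And>u. u \<in> V \<Longrightarrow> u \<notin> P \<Longrightarrow> c u \<in> \<tau> ` M \<Longrightarrow> f u \<le> n"
    proof -
      fix u assume u: "u \<in> V" "u \<notin> P" "c u \<in> \<tau> ` M"
      have "f u \<in> inv_into M \<tau> (c u)" using choose[OF u] by (rule conjunct1)
      moreover have "inv_into M \<tau> (c u) \<subseteq> {1..n}" using edge[OF inv_into_into[OF u(3)]] by (rule conjunct1)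
      ultimately show "f u \<le> n" by auto
    qed
    have big: "\<And>u. u \<in> V \<Longrightarrow> u \<notin> P \<Longrightarrow> c u \<notin> \<tau> ` M \<Longrightarrow> f u > n"
    proof -
      fix u assume "u \<in> V" "u \<notin> P" "c u \<notin> \<tau> ` M"
      hence "f u = n + c u" "c u \<ge> 1" using fresh cV1 by auto
      thus "f u > n" by simp
    qed
    have dn: "\<And>u. u \<in> P \<Longrightarrow> d u \<le> n" using dP by auto
    show "f v \<noteq> f w"
    proof (cases "v \<in> P")
      case vP: True
      show ?thesis
      proof (cases "w \<in> P")
        case True thus ?thesis using vP dprop vw fP unfolding proper_on_def by metis
      next
        case wP: False
        show ?thesis
        proof (cases "c w \<in> \<tau> ` M")
          case True thus ?thesis using choose[OF w wP True] vP wv fP by metis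
        next
          case False thus ?thesis using big[OF w wP False] dn[OF vP] fP[OF vP] by simp
        qed
      qed
    next
      case vP: False
      show ?thesis
      proof (cases "w \<in> P")
        case wP: True
        show ?thesis
        proof (cases "c v \<in> \<tau> ` M")
          case True thus ?thesis using choose[OF v vP True] wP vw fP by metis
        next
          case False thus ?thesis using big[OF v vP False] dn[OF wP] fP[OF wP] by simp
        qed
      next
        case wP: False
        have cvw: "c v \<noteq> c w" using cp v w vw unfolding proper_on_def by blast
        show ?thesis
        proof (cases "c v \<in> \<tau> ` M")
          case cv: True
          show ?thesis
          proof (cases "c w \<in> \<tau> ` M")
            case cw: True
            have "inv_into M \<tau> (c v) \<noteq> inv_into M \<tau> (c w)"
              using cv cw cvw by (metis f_inv_into_f)
            hence dj: "inv_into M \<tau> (c v) \<inter> inv_into M \<tau> (c w) = {}"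
              using Mdisj cv cw by (simp add: inv_into_into)
            have f1: "f v \<in> inv_into M \<tau> (c v)" using choose[OF v vP cv] by (rule conjunct1)
            have f2: "f w \<in> inv_into M \<tau> (c w)" using choose[OF w wP cw] by (rule conjunct1)
            show ?thesis
            proof
              assume "f v = f w"
              hence "f v \<in> inv_into M \<tau> (c v) \<inter> inv_into M \<tau> (c w)" using f1 f2 by simp
              thus False using dj by simp
            qed
          next
            case cw: False thus ?thesis using small[OF v vP cv] big[OF w wP cw] by simp
          qed
        next
          case cv: False
          show ?thesis
          proof (cases "c w \<in> \<tau> ` M")
            case cw: True thus ?thesis using small[OF w wP cw] big[OF v vP cv] by simp
          next
            case cw: False thus ?thesis using fresh[OF vP cv] fresh[OF wP cw] cvw by simp
          qed
        qed
      qed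
    qed
  qed
  have rng: "f ` V \<subseteq> {1..n} \<union> (\<lambda>i. n + i) ` ({1..r} - \<tau> ` M)"
  proof
    fix z assume "z \<in> f ` V"
    then obtain v where v: "v \<in> V" "z = f v" by blast
    show "z \<in> {1..n} \<union> (\<lambda>i. n + i) ` ({1..r} - \<tau> ` M)"
    proof (cases "v \<in> P")
      case True thus ?thesis using dP v fP by auto
    next
      case vP: False
      show ?thesis
      proof (cases "c v \<in> \<tau> ` M")
        case True
        have "f v \<in> {1..n}" using choose[OF v(1) vP True] edge True
          by (meson inv_into_into subsetD)
        thus ?thesis using v by blast
      next
        case False thus ?thesis using fresh[OF vP False] cV1[OF v(1)] v by blast
      qed
    qed
  qed
  have "card (f ` V) \<le> card ({1..n} \<union> (\<lambda>i. n + i) ` ({1..r} - \<tau> ` M))"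
    by (rule card_mono) (use rng in auto)
  also have "\<dots> \<le> card {1..n} + card ((\<lambda>i. n + i) ` ({1..r} - \<tau> ` M))"
    by (rule card_Un_le)
  also have "\<dots> \<le> n + card ({1..r} - \<tau> ` M)"
    using card_image_le[of "{1..r} - \<tau> ` M" "\<lambda>i. n + i"] by simp
  also have "card ({1..r} - \<tau> ` M) = r - card M"
    using card_Diff_subset[OF finite_imageI[OF finM] trng] card_image[OF tinj] by simp
  finally have "card (f ` V) \<le> n + r - card M" using cM by simp
  moreover have "\<forall>v\<in>P. f v = d v" unfolding f_def by simp
  ultimately show ?thesis unfolding extends_to_coloring_def using proper by blast
qed

theorem lemma10:
  fixes V :: "'a set" and E :: "'a \<Rightarrow> 'a \<Rightarrow> bool" and P :: "'a set" and d :: "'a \<Rightarrow> nat"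
    and r k :: nat
  assumes "0 < r" and "0 < k"
    and "graph V E" and "chromatic_le V E r"
    and "P \<subseteq> V" and "precoloring E P (r + k) d"
  shows "(k \<le> r \<and>
          (\<exists>M. good_matching (r + k) (Ed0 E P d (r + k)) (Ed1 E P d (r + k)) (Ed2 E P d (r + k)) M
               \<and> card M = (r + k) div 2)
          \<longrightarrow> extends_to_coloring V E P d ((3 * r + k + 1) div 2))
       \<and> (r < k \<and>
          (\<exists>M. good_matching (r + k) (Ed0 E P d (r + k)) (Ed1 E P d (r + k)) (Ed2 E P d (r + k)) M
               \<and> card M = r)
          \<longrightarrow> extends_to_coloring V E P d (r + k))"
proof (intro conjI impI)
  assume h: "k \<le> r \<and> (\<exists>M. good_matching (r + k) (Ed0 E P d (r + k)) (Ed1 E P d (r + k)) (Ed2 E P d (r + k)) M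
               \<and> card M = (r + k) div 2)"
  then obtain M where M: "good_matching (r + k) (Ed0 E P d (r + k)) (Ed1 E P d (r + k)) (Ed2 E P d (r + k)) M"
    "card M = (r + k) div 2" by blast
  have kr: "k \<le> r" using h by blast
  define q where "q = (r + k) div 2"
  define s where "s = (r + k) mod 2"
  have qs: "r + k = 2 * q + s" unfolding q_def s_def by simp
  have s1: "s = 0 \<or> s = 1" unfolding s_def by auto
  have le: "card M \<le> r" unfolding M(2) q_def[symmetric] using kr qs by linarith
  have "extends_to_coloring V E P d (r + k + r - card M)"
    by (rule main[OF assms(3,4,5,6) M(1) le])
  moreover have "r + k + r - card M \<le> (3 * r + k + 1) div 2"
  proof -
    have "3 * r + k + 1 = 2 * (r + q + s) + (1 - s)" using qs s1 by auto
    hence "(3 * r + k + 1) div 2 = r + q + s" using s1 by auto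
    moreover have "r + k + r - card M = r + q + s" unfolding M(2) q_def[symmetric] using qs by linarith
    ultimately show ?thesis by simp
  qed
  ultimately show "extends_to_coloring V E P d ((3 * r + k + 1) div 2)" by (rule ext_mono)
next
  assume h: "r < k \<and> (\<exists>M. good_matching (r + k) (Ed0 E P d (r + k)) (Ed1 E P d (r + k)) (Ed2 E P d (r + k)) M
               \<and> card M = r)"
  then obtain M where M: "good_matching (r + k) (Ed0 E P d (r + k)) (Ed1 E P d (r + k)) (Ed2 E P d (r + k)) M"
    "card M = r" by blast
  have "extends_to_coloring V E P d (r + k + r - card M)"
    by (rule main[OF assms(3,4,5,6) M(1)]) (simp add: M(2))
  thus "extends_to_coloring V E P d (r + k)" using M(2) by simp
qed

end
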